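(* Let $(G,+)$ be a finite abelian group, $(p_g)_{g\in G}\subset(0,1)$ with $\sum_gp_g=1$, $\Omega=G^{\mathbb N}$, $\mathbb P$ the Bernoulli measure $\mathbb P[g_0,\dots,g_{n-1}]=\prod_{j<n}p_{g_j}$, $N\ge2$ an integer, $\Phi:\Omega\to\Omega$ given by $(\Phi\omega)_j=\omega_j+\dots+\omega_{j+N-1}$, and $\mathbb P_0=\mathbb P\circ\Phi^{-1}$. Then: (a) $\mathbb P_0$ is $T$-invariant; (b) $\mathbb P_0$ is ψ-mixing; (c) if there exists $h\in G$ with $p_h>p_g$ for all $g\in G\setminus\{h\}$, then there exists $s\in G$ such that, for the constant sequence $\omega$ with $\omega_j=s$ for all $j\ge0$, the limit $\lim_{n\to\infty}\mathbb P_0(A^\omega_{n+1}\mid A^\omega_n)$ does not exist.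
   Context: $T$ is the left shift on $G^{\mathbb N}$; cylinders $[g_0,\dots,g_{n-1}]=\{\omega:\omega_j=g_j,0\le j<n\}$; $A^\omega_n=[\omega_0,\dots,\omega_{n-1}]$. A probability measure $Q$ on $G^{\mathbb N}$ (with the σ-algebra $\mathcal F$ generated by coordinates) is ψ-mixing if there is a sequence $\psi_m\ge0$ with $\psi_m\to0$ such that $|Q(E\cap T^{-(n+m)}F)-Q(E)Q(F)|\le\psi_mQ(E)Q(F)$ for all $m,n\in\mathbb N$, $E$ in the σ-algebra generated by coordinates $0,\dots,n-1$, and $F\in\mathcal F$. *)

theory Defs
  imports "HOL-Probability.Probability"
begin

abbreviation SeqSp :: "(nat \<Rightarrow> 'g) measure" where
  "SeqSp \<equiv> Pi\<^sub>M UNIV (\<lambda>_. count_space UNIV)"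

definition shift :: "(nat \<Rightarrow> 'g) \<Rightarrow> (nat \<Rightarrow> 'g)" where
  "shift \<omega> = (\<lambda>j. \<omega> (Suc j))"

definition cylinder :: "'g list \<Rightarrow> (nat \<Rightarrow> 'g) set" where
  "cylinder gs = {\<omega>. \<forall>j < length gs. \<omega> j = gs ! j}"

definition cyl_of :: "(nat \<Rightarrow> 'g) \<Rightarrow> nat \<Rightarrow> (nat \<Rightarrow> 'g) set" where
  "cyl_of \<omega> n = {\<omega>'. \<forall>j < n. \<omega>' j = \<omega> j}"

definition coord_sigma :: "nat \<Rightarrow> (nat \<Rightarrow> 'g) set set" where
  "coord_sigma n = sigma_sets UNIV {{\<omega>. \<omega> i \<in> A} | i A. i < n}"

definition psi_mixing :: "(nat \<Rightarrow> 'g) measure \<Rightarrow> bool" where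
  "psi_mixing Q \<longleftrightarrow> (\<exists>\<psi> :: nat \<Rightarrow> real. (\<forall>m. \<psi> m \<ge> 0) \<and> \<psi> \<longlonglongrightarrow> 0 \<and>
     (\<forall>m n E F. E \<in> coord_sigma n \<and> F \<in> sets SeqSp \<longrightarrow>
        \<bar>measure Q (E \<inter> (shift ^^ (n + m)) -` F) - measure Q E * measure Q F\<bar>
          \<le> \<psi> m * measure Q E * measure Q F))"

definition block_sum :: "nat \<Rightarrow> (nat \<Rightarrow> 'g::comm_monoid_add) \<Rightarrow> (nat \<Rightarrow> 'g)" where
  "block_sum N \<omega> = (\<lambda>j. \<Sum>i<N. \<omega> (j + i))"

end

theory Submission
  imports Defs
begin


definition pre :: "(nat \<Rightarrow> 'g) \<Rightarrow> nat \<Rightarrow> 'g list" where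
  "pre \<omega> K = map \<omega> [0..<K]"

lemma length_pre[simp]: "length (pre \<omega> K) = K" by (simp add: pre_def)
lemma nth_pre[simp]: "j < K \<Longrightarrow> pre \<omega> K ! j = \<omega> j" by (simp add: pre_def)

lemma space_Seq[simp]: "space SeqSp = UNIV"
  by (simp add: space_PiM)

lemma cylinder_pre: "cylinder w = {\<omega>. pre \<omega> (length w) = w}"
  by (auto simp: cylinder_def list_eq_iff_nth_eq)

lemma cylinder_meas: "cylinder (w::'g list) \<in> sets SeqSp"
proof (induction w rule: rev_induct)
  case Nil
  have "cylinder ([]::'g list) = space SeqSp" by (simp add: cylinder_def)
  then show ?case using sets.top[of "SeqSp :: (nat \<Rightarrow> 'g) measure"] by simp
next
  case (snoc a w)
  have "cylinder (w @ [a]) = cylinder w \<inter> ((\<lambda>\<omega>. \<omega> (length w)) -` {a} \<inter> space SeqSp)"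
    by (auto simp: cylinder_def nth_append less_Suc_eq)
  moreover have "(\<lambda>\<omega>. \<omega> (length w)) -` {a} \<inter> space SeqSp \<in> sets (SeqSp :: (nat \<Rightarrow> 'g) measure)"
    by (rule measurable_sets[OF measurable_component_singleton]) auto
  ultimately show ?case using snoc by auto
qed

lemma finite_len: "finite {w::('g::finite) list. length w = K}"
  using finite_lists_length_eq[of "UNIV::'g set" K] by simp

lemma pre_set_UN: "{\<omega>. pre \<omega> K \<in> A} = (\<Union>w\<in>{w\<in>A. length w = K}. cylinder w)"
  by (auto simp: cylinder_pre)

lemma pre_set_in:
  assumes "sigma_algebra UNIV S" "\<And>w. cylinder (w::('g::finite) list) \<in> S"
  shows "{\<omega>. pre \<omega> K \<in> A} \<in> S"
proof -
  interpret sigma_algebra UNIV S by fact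
  have "finite {w\<in>A. length w = K}" by (rule finite_subset[OF _ finite_len[of K]]) auto
  then show ?thesis unfolding pre_set_UN using assms(2) by blast
qed

lemma pre_set_meas: "{\<omega>. pre \<omega> K \<in> A} \<in> sets (SeqSp :: (nat \<Rightarrow> 'g::finite) measure)"
  using pre_set_in[OF _ cylinder_meas] sets.sigma_algebra_axioms[of "SeqSp :: (nat \<Rightarrow> 'g) measure"]
  by simp

lemma pre_fun_meas: "(\<lambda>\<omega>. F (pre \<omega> K)) \<in> measurable (SeqSp :: (nat \<Rightarrow> 'g::finite) measure) (count_space UNIV)"
proof (rule measurableI)
  fix B
  have "(\<lambda>\<omega>. F (pre \<omega> K)) -` B \<inter> space SeqSp = {\<omega>. pre \<omega> K \<in> F -` B}" by auto
  then show "(\<lambda>\<omega>. F (pre \<omega> K)) -` B \<inter> space SeqSp \<in> sets (SeqSp :: (nat \<Rightarrow> 'g::finite) measure)"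
    using pre_set_meas by metis
qed auto

lemma shift_meas: "shift \<in> measurable SeqSp SeqSp"
  unfolding shift_def
  by (rule measurable_PiM_single') (auto intro: measurable_component_singleton)

lemma block_sum_pre: "block_sum N \<omega> j = (\<Sum>i<N. pre \<omega> (j+N) ! (j+i))"
  by (simp add: block_sum_def)


lemma block_sum_meas: "block_sum N \<in> measurable SeqSp (SeqSp :: (nat \<Rightarrow> 'g::{finite,comm_monoid_add}) measure)"
proof -
  have "(\<lambda>\<omega> j. block_sum N \<omega> j) \<in> measurable SeqSp (SeqSp :: (nat \<Rightarrow> 'g) measure)"
  proof (rule measurable_PiM_single')
    fix j :: nat
    show "(\<lambda>\<omega>::nat\<Rightarrow>'g. block_sum N \<omega> j) \<in> measurable SeqSp (count_space UNIV)"
      unfolding block_sum_pre using pre_fun_meas[of "\<lambda>w::'g list. \<Sum>i<N. w ! (j+i)" "j+N"] by simp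
  qed auto
  then show ?thesis by simp
qed




lemma pre_take: "k \<le> K \<Longrightarrow> pre \<omega> k = take k (pre \<omega> K)"
  by (simp add: pre_def take_map)

lemma cyl_Int: "length u \<le> length v \<Longrightarrow>
   cylinder u \<inter> cylinder v = (if take (length u) v = u then cylinder v else {})"
proof -
  assume a: "length u \<le> length v"
  have e: "\<And>\<omega>. pre \<omega> (length u) = take (length u) (pre \<omega> (length v))"
    by (rule pre_take[OF a])
  have "x \<in> cylinder u \<inter> cylinder v \<longleftrightarrow> (if take (length u) v = u then x \<in> cylinder v else False)" for x
    using e[of x] unfolding cylinder_pre by auto
  then show ?thesis by (cases "take (length u) v = u") (simp_all add: set_eq_iff)
qed

lemma cyl_Nil[simp]: "cylinder [] = UNIV" by (simp add: cylinder_def)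

lemma sets_Seq_gen: "sets (SeqSp :: (nat \<Rightarrow> 'g::finite) measure) = sigma_sets UNIV (insert {} (range cylinder))"
proof
  let ?E = "insert {} (range cylinder) :: (nat \<Rightarrow> 'g) set set"
  have sa: "sigma_algebra UNIV (sigma_sets UNIV ?E)"
    by (rule sigma_algebra_sigma_sets) auto
  have "sigma_sets (\<Pi>\<^sub>E i\<in>UNIV. space (count_space UNIV))
     {{f \<in> \<Pi>\<^sub>E i\<in>UNIV. space (count_space (UNIV::'g set)). f i \<in> A} |i A. i \<in> UNIV \<and> A \<in> sets (count_space UNIV)}
     \<subseteq> sigma_sets UNIV ?E"
  proof -
    have "{{f \<in> \<Pi>\<^sub>E i\<in>UNIV. space (count_space (UNIV::'g set)). f i \<in> A} |i A. i \<in> UNIV \<and> A \<in> sets (count_space UNIV)}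
      \<subseteq> sigma_sets UNIV ?E"
    proof safe
      fix i and A :: "'g set"
      have "{f \<in> \<Pi>\<^sub>E i\<in>UNIV. space (count_space (UNIV::'g set)). f i \<in> A} = {\<omega>. pre \<omega> (Suc i) \<in> {w. w ! i \<in> A}}"
        by auto
      also have "\<dots> \<in> sigma_sets UNIV ?E"
        by (rule pre_set_in[OF sa]) auto
      finally show "{f \<in> \<Pi>\<^sub>E i\<in>UNIV. space (count_space (UNIV::'g set)). f i \<in> A} \<in> sigma_sets UNIV ?E" .
    qed
    then show ?thesis using sigma_algebra.sigma_sets_subset[OF sa] by simp
  qed
  then show "sets (SeqSp :: (nat \<Rightarrow> 'g::finite) measure) \<subseteq> sigma_sets UNIV ?E"
    by (simp add: sets_PiM_single)
  show "sigma_sets UNIV ?E \<subseteq> sets (SeqSp :: (nat \<Rightarrow> 'g::finite) measure)"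
    using sigma_algebra.sigma_sets_subset[OF sets.sigma_algebra_axioms[of "SeqSp :: (nat \<Rightarrow> 'g) measure"], of ?E]
      cylinder_meas by auto
qed

lemma seq_measure_eq:
  fixes M M' :: "(nat \<Rightarrow> 'g::finite) measure"
  assumes sM: "sets M = sets SeqSp" and sM': "sets M' = sets SeqSp"
    and fM: "finite_measure M" and fM': "finite_measure M'"
    and eq: "\<And>w. measure M (cylinder w) = measure M' (cylinder w)"
  shows "M = M'"
proof (rule measure_eqI_generator_eq[where E="insert {} (range cylinder)" and \<Omega>=UNIV and A="\<lambda>_. cylinder []"])
  show "Int_stable (insert {} (range cylinder) :: (nat \<Rightarrow> 'g) set set)"
  proof (rule Int_stableI)
    fix a b :: "(nat \<Rightarrow> 'g) set"
    assume a: "a \<in> insert {} (range cylinder)" and b: "b \<in> insert {} (range cylinder)"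
    show "a \<inter> b \<in> insert {} (range cylinder)"
    proof (cases "a = {} \<or> b = {}")
      case True then show ?thesis by auto
    next
      case False
      then obtain u v where uv: "a = cylinder u" "b = cylinder v" using a b by auto
      show ?thesis
      proof (cases "length u \<le> length v")
        case True then show ?thesis using cyl_Int[OF True] uv by auto
      next
        case False
        then have "length v \<le> length u" by simp
        then show ?thesis using cyl_Int[of v u] uv by (auto simp: Int_commute)
      qed
    qed
  qed
  show "sets M = sigma_sets UNIV (insert {} (range cylinder))" using sM sets_Seq_gen by metis
  show "sets M' = sigma_sets UNIV (insert {} (range cylinder))" using sM' sets_Seq_gen by metis
  fix X assume "X \<in> insert {} (range (cylinder :: 'g list \<Rightarrow> _))"
  then show "emeasure M X = emeasure M' X"
    using eq finite_measure.emeasure_eq_measure[OF fM] finite_measure.emeasure_eq_measure[OF fM'] by auto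
next
  show "emeasure M (cylinder []) \<noteq> \<infinity>" for i :: nat
    using finite_measure.emeasure_eq_measure[OF fM] by simp
  have "cylinder ([]::'g list) \<in> range cylinder" by (rule rangeI)
  then show "range (\<lambda>i::nat. cylinder ([]::'g list)) \<subseteq> insert {} (range cylinder)" by blast
qed auto

definition wt :: "('g \<Rightarrow> real) \<Rightarrow> 'g list \<Rightarrow> real" where
  "wt p w = prod_list (map p w)"

lemma wt_append[simp]: "wt p (u @ v) = wt p u * wt p v" by (simp add: wt_def)
lemma wt_Cons[simp]: "wt p (a # v) = p a * wt p v" by (simp add: wt_def)
lemma wt_Nil[simp]: "wt p [] = 1" by (simp add: wt_def)

locale bern =
  fixes p :: "'g::finite \<Rightarrow> real" and P :: "(nat \<Rightarrow> 'g) measure"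
  assumes p_pos: "\<And>g. 0 < p g" and p_sum: "(\<Sum>g\<in>UNIV. p g) = 1"
    and P_sets: "sets P = sets SeqSp" and P_prob: "prob_space P"
    and P_bern: "\<And>gs. measure P (cylinder gs) = (\<Prod>j<length gs. p (gs ! j))"
begin

lemma space_P[simp]: "space P = UNIV"
  using sets_eq_imp_space_eq[OF P_sets] by simp

lemma meas_P_iff: "measurable P N = measurable SeqSp N"
  by (rule measurable_cong_sets[OF P_sets refl])

lemma shiftP_meas: "shift \<in> measurable P SeqSp" by (subst meas_P_iff) (rule shift_meas)
lemma finP: "finite_measure P"
  using P_prob by (simp add: prob_space_def)

lemma wt_pos: "0 < wt p w"
  by (induction w) (auto simp: p_pos)

lemma meas_cyl: "measure P (cylinder w) = wt p w"
  unfolding P_bern wt_def prod.list_conv_set_nth by (simp add: atLeast0LessThan)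

lemma meas_pre: "measure P {\<omega>. pre \<omega> K \<in> A} = (\<Sum>w\<in>{w\<in>A. length w = K}. wt p w)"
proof -
  have fin: "finite {w\<in>A. length w = K}" by (rule finite_subset[OF _ finite_len[of K]]) auto
  have "measure P {\<omega>. pre \<omega> K \<in> A} = (\<Sum>w\<in>{w\<in>A. length w = K}. measure P (cylinder w))"
    unfolding pre_set_UN
  proof (rule finite_measure.finite_measure_finite_Union[OF finP fin])
    show "cylinder ` {w \<in> A. length w = K} \<subseteq> sets P" using cylinder_meas P_sets by auto
    show "disjoint_family_on cylinder {w \<in> A. length w = K}"
      by (auto simp: disjoint_family_on_def cylinder_pre)
  qed
  then show ?thesis by (simp add: meas_cyl)
qed

lemma shift_inv: "distr P SeqSp shift = P"
proof (rule seq_measure_eq)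
  show "finite_measure (distr P SeqSp shift)"
  proof -
    from prob_space.prob_space_distr[OF P_prob shiftP_meas] show ?thesis by (simp add: prob_space_def)
  qed
  show "finite_measure P" by (rule finP)
  show "sets P = sets SeqSp" by (rule P_sets)
  fix w :: "'g list"
  have "measure (distr P SeqSp shift) (cylinder w) = measure P (shift -` cylinder w)"
    using measure_distr[OF shiftP_meas cylinder_meas[of w]] by simp
  also have "shift -` cylinder w = {\<omega>. pre \<omega> (Suc (length w)) \<in> range (\<lambda>a. a # w)}"
  proof -
    have e: "pre \<omega> (Suc (length w)) = \<omega> 0 # pre (shift \<omega>) (length w)" for \<omega>
      by (simp add: list_eq_iff_nth_eq nth_Cons shift_def split: nat.split)
    show ?thesis unfolding cylinder_pre by (auto simp: e image_iff)
  qed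
  also have "measure P \<dots> = (\<Sum>u\<in>range (\<lambda>a. a # w). wt p u)"
  proof -
    have "{u \<in> range (\<lambda>a. a # w). length u = Suc (length w)} = range (\<lambda>a. a # w)" by auto
    then show ?thesis by (simp only: meas_pre)
  qed
  also have "\<dots> = (\<Sum>a\<in>UNIV. p a * wt p w)"
    by (subst sum.reindex) (auto simp: inj_on_def)
  also have "\<dots> = wt p w" by (simp add: sum_distrib_right[symmetric] p_sum)
  finally show "measure (distr P SeqSp shift) (cylinder w) = measure P (cylinder w)"
    by (simp add: meas_cyl)
qed simp

end



lemma shiftpow: "(shift ^^ k) \<omega> = (\<lambda>j. \<omega> (j + k))"
  by (induction k arbitrary: \<omega>) (auto simp: shift_def)

lemma shiftpow_meas: "(shift ^^ k) \<in> measurable SeqSp (SeqSp :: (nat \<Rightarrow> 'g) measure)"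
proof -
  have "(\<lambda>\<omega> j. (\<omega>::nat \<Rightarrow> 'g) (j + k)) \<in> measurable SeqSp SeqSp"
    by (rule measurable_PiM_single') (auto intro: measurable_component_singleton)
  moreover have "(shift ^^ k) = (\<lambda>\<omega> j. (\<omega>::nat \<Rightarrow> 'g) (j + k))" by (rule ext) (simp add: shiftpow)
  ultimately show ?thesis by simp
qed

lemma pre_add: "pre \<omega> (k + l) = pre \<omega> k @ pre ((shift ^^ k) \<omega>) l"
  by (auto simp: list_eq_iff_nth_eq nth_append shiftpow add.commute)

lemma wt_ge: "(\<And>g. c \<le> p g) \<Longrightarrow> 0 \<le> c \<Longrightarrow> c ^ length w \<le> wt p w"
proof (induction w)
  case (Cons a w)
  then have "c * c ^ length w \<le> p a * wt p w"
    by (intro mult_mono) (auto intro: order_trans[of 0 c])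
  then show ?case by simp
qed simp

context bern
begin

lemma pre_set_P: "{\<omega>. pre \<omega> K \<in> A} \<in> sets P"
  using pre_set_meas P_sets by metis

lemma shiftpowP_meas: "(shift ^^ k) \<in> measurable P SeqSp"
  by (subst meas_P_iff) (rule shiftpow_meas)


lemma indep0:
  assumes Y: "Y \<in> sets SeqSp"
  shows "measure P ({\<omega>. pre \<omega> k \<in> A} \<inter> (shift ^^ k) -` Y) = measure P {\<omega>. pre \<omega> k \<in> A} * measure P Y"
proof -
  let ?X = "{\<omega>. pre \<omega> k \<in> A}"
  have X: "?X \<in> sets P" by (rule pre_set_P)
  define M1 where "M1 = distr (density P (indicator ?X)) SeqSp (shift ^^ k)"
  define M2 where "M2 = scale_measure (ennreal (measure P ?X)) P"
  have Tm: "(shift ^^ k) \<in> measurable (density P (indicator ?X)) SeqSp"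
    using shiftpowP_meas measurable_cong_sets[OF sets_density refl] by metis
  have em1: "emeasure M1 B = ennreal (measure P (?X \<inter> (shift ^^ k) -` B))" if B: "B \<in> sets SeqSp" for B
  proof -
    have TB: "(shift ^^ k) -` B \<in> sets P"
      using measurable_sets[OF shiftpowP_meas B] by simp
    have "emeasure M1 B = emeasure (density P (indicator ?X)) ((shift ^^ k) -` B)"
      unfolding M1_def using emeasure_distr[OF Tm B] by simp
    also have "\<dots> = emeasure P (?X \<inter> (shift ^^ k) -` B)"
      by (rule emeasure_restricted[OF X TB])
    also have "\<dots> = ennreal (measure P (?X \<inter> (shift ^^ k) -` B))"
      by (rule finite_measure.emeasure_eq_measure[OF finP])
    finally show ?thesis .
  qed
  have em2: "emeasure M2 B = ennreal (measure P ?X * measure P B)" for B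
    unfolding M2_def emeasure_scale_measure finite_measure.emeasure_eq_measure[OF finP]
    by (simp add: ennreal_mult)
  have sM1: "sets M1 = sets SeqSp" unfolding M1_def by simp
  have sM2: "sets M2 = sets SeqSp" unfolding M2_def using P_sets by simp
  have "M1 = M2"
  proof (rule seq_measure_eq[OF sM1 sM2])
    show "finite_measure M1"
    proof (rule finite_measureI)
      have "space M1 = UNIV" using sets_eq_imp_space_eq[OF sM1] by simp
      moreover have "(UNIV :: (nat \<Rightarrow> 'g) set) \<in> sets SeqSp" using sets.top[of "SeqSp :: (nat \<Rightarrow> 'g) measure"] by simp
      then have "emeasure M1 UNIV = ennreal (measure P (?X \<inter> (shift ^^ k) -` UNIV))" by (rule em1)
      ultimately show "emeasure M1 (space M1) \<noteq> \<infinity>" by simp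
    qed
    show "finite_measure M2"
      by (rule finite_measureI) (simp add: em2)
    fix v :: "'g list"
    have "measure M1 (cylinder v) = measure P (?X \<inter> (shift ^^ k) -` cylinder v)"
      using em1[OF cylinder_meas[of v]] by (simp add: measure_def[of M1])
    also have "?X \<inter> (shift ^^ k) -` cylinder v
        = {\<omega>. pre \<omega> (k + length v) \<in> (\<lambda>u. u @ v) ` {u\<in>A. length u = k}}"
      unfolding cylinder_pre pre_add by auto
    also have "measure P \<dots> = (\<Sum>w\<in>(\<lambda>u. u @ v) ` {u\<in>A. length u = k}. wt p w)"
    proof -
      have "{w \<in> (\<lambda>u. u @ v) ` {u\<in>A. length u = k}. length w = k + length v}
          = (\<lambda>u. u @ v) ` {u\<in>A. length u = k}" by auto
      then show ?thesis by (simp only: meas_pre)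
    qed
    also have "\<dots> = (\<Sum>u\<in>{u\<in>A. length u = k}. wt p u * wt p v)"
      by (subst sum.reindex) (auto simp: inj_on_def)
    also have "\<dots> = measure P ?X * measure P (cylinder v)"
      by (simp add: meas_pre meas_cyl sum_distrib_right)
    finally show "measure M1 (cylinder v) = measure M2 (cylinder v)"
      by (simp add: measure_def[of M2] em2)
  qed
  then have "emeasure M1 Y = emeasure M2 Y" by simp
  then show ?thesis using em1[OF Y] em2[of Y]
    by (simp add: ennreal_inj)
qed


lemma pre_set_take: "K \<le> k \<Longrightarrow> {\<omega>. pre \<omega> K \<in> A} = {\<omega>. pre \<omega> k \<in> {u. take K u \<in> A}}"
proof -
  assume h: "K \<le> k"
  have e: "\<And>\<omega>. pre \<omega> K = take K (pre \<omega> k)" by (rule pre_take[OF h])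
  show ?thesis by (simp add: e)
qed

lemma indep:
  assumes Y: "Y \<in> sets SeqSp" and Kk: "K \<le> k"
  shows "measure P ({\<omega>. pre \<omega> K \<in> A} \<inter> (shift ^^ k) -` Y) = measure P {\<omega>. pre \<omega> K \<in> A} * measure P Y"
  unfolding pre_set_take[OF Kk] by (rule indep0[OF Y])

lemma bound:
  assumes Y: "Y \<in> sets SeqSp" and kK: "k \<le> K" and c: "0 < c" "\<And>g. c \<le> p g"
  shows "measure P ({\<omega>. pre \<omega> K \<in> A} \<inter> (shift ^^ k) -` Y)
     \<le> (1/c) ^ (K - k) * measure P {\<omega>. pre \<omega> K \<in> A} * measure P Y"
proof -
  let ?A = "{w\<in>A. length w = K}"
  let ?B = "take k ` ?A"
  have finA: "finite ?A" by (rule finite_subset[OF _ finite_len[of K]]) auto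
  have TY: "(shift ^^ k) -` Y \<in> sets P"
    using measurable_sets[OF shiftpowP_meas Y] by simp
  have sub: "{\<omega>. pre \<omega> K \<in> A} \<subseteq> {\<omega>. pre \<omega> k \<in> ?B}"
  proof
    fix x assume "x \<in> {\<omega>. pre \<omega> K \<in> A}"
    then have "pre x K \<in> ?A" by simp
    then have "take k (pre x K) \<in> ?B" by (rule imageI)
    moreover have "pre x k = take k (pre x K)" by (rule pre_take[OF kK])
    ultimately show "x \<in> {\<omega>. pre \<omega> k \<in> ?B}" by simp
  qed
  have "measure P ({\<omega>. pre \<omega> K \<in> A} \<inter> (shift ^^ k) -` Y) \<le> measure P ({\<omega>. pre \<omega> k \<in> ?B} \<inter> (shift ^^ k) -` Y)"
    by (rule finite_measure.finite_measure_mono[OF finP]) (use sub pre_set_P TY in auto)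
  also have "\<dots> = measure P {\<omega>. pre \<omega> k \<in> ?B} * measure P Y"
    by (rule indep0[OF Y])
  also have "measure P {\<omega>. pre \<omega> k \<in> ?B} \<le> (1/c) ^ (K - k) * measure P {\<omega>. pre \<omega> K \<in> A}"
  proof -
    define f where "f u = (SOME w. w \<in> ?A \<and> take k w = u)" for u
    have f: "f u \<in> ?A \<and> take k (f u) = u" if u: "u \<in> ?B" for u
    proof -
      obtain w where "w \<in> ?A \<and> take k w = u" using u by blast
      then show ?thesis unfolding f_def by (rule someI)
    qed
    have finB: "finite ?B" using finA by simp
    have Bk: "{u\<in>?B. length u = k} = ?B" using kK by auto
    have "measure P {\<omega>. pre \<omega> k \<in> ?B} = (\<Sum>u\<in>?B. wt p u)"
      unfolding meas_pre Bk ..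
    also have "\<dots> \<le> (\<Sum>u\<in>?B. (1/c) ^ (K - k) * wt p (f u))"
    proof (rule sum_mono)
      fix u assume u: "u \<in> ?B"
      have "f u = u @ drop k (f u)" using f[OF u] by (metis append_take_drop_id)
      then have "wt p (f u) = wt p u * wt p (drop k (f u))" by (metis wt_append)
      moreover have "c ^ (K - k) \<le> wt p (drop k (f u))"
        using wt_ge[of c p "drop k (f u)"] c f[OF u] by simp
      moreover have "0 < wt p u" by (rule wt_pos)
      ultimately have "wt p u * c ^ (K - k) \<le> wt p (f u)" by simp
      then show "wt p u \<le> (1/c) ^ (K - k) * wt p (f u)"
        using c by (simp add: field_simps power_divide)
    qed
    also have "\<dots> = (1/c) ^ (K - k) * (\<Sum>w\<in>f ` ?B. wt p w)"
    proof -
      have "inj_on f ?B" by (rule inj_onI) (metis f)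
      then show ?thesis by (simp add: sum_distrib_left sum.reindex)
    qed
    also have "\<dots> \<le> (1/c) ^ (K - k) * (\<Sum>w\<in>?A. wt p w)"
    proof -
      have fB: "f ` ?B \<subseteq> ?A" using f by blast
      have "(\<Sum>w\<in>f ` ?B. wt p w) \<le> (\<Sum>w\<in>?A. wt p w)"
        by (rule sum_mono2[OF finA fB]) (simp add: less_imp_le[OF wt_pos])
      moreover have "0 \<le> (1/c) ^ (K - k)" using c by simp
      ultimately show ?thesis by (rule mult_left_mono)
    qed
    also have "\<dots> = (1/c) ^ (K - k) * measure P {\<omega>. pre \<omega> K \<in> A}"
      by (simp add: meas_pre)
    finally show ?thesis .
  qed
  then have "measure P {\<omega>. pre \<omega> k \<in> ?B} * measure P Y \<le> (1/c) ^ (K - k) * measure P {\<omega>. pre \<omega> K \<in> A} * measure P Y"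
    by (rule mult_right_mono) simp
  finally show ?thesis .
qed

end



lemma block_sum_shiftpow: "block_sum N ((shift ^^ k) \<omega>) = (shift ^^ k) (block_sum N \<omega>)"
  by (auto simp: block_sum_def shiftpow add_ac intro!: sum.cong)

lemma block_sum_shift: "block_sum N (shift \<omega>) = shift (block_sum N \<omega>)"
  using block_sum_shiftpow[of N 1 \<omega>] by simp

lemma coord_pre:
  assumes "E \<in> coord_sigma n"
  shows "\<exists>A. E = {\<omega>. pre \<omega> n \<in> A}"
  using assms unfolding coord_sigma_def
proof (induction rule: sigma_sets.induct)
  case (Basic a)
  then obtain i B where a: "a = {\<omega>. \<omega> i \<in> B}" "i < n" by auto
  then have "a = {\<omega>. pre \<omega> n \<in> {w. w ! i \<in> B}}" by auto
  then show ?case by blast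
next
  case Empty
  have "{} = {\<omega>. pre \<omega> n \<in> {}}" by simp
  then show ?case by blast
next
  case (Compl a)
  then obtain A where "a = {\<omega>. pre \<omega> n \<in> A}" by blast
  then have "UNIV - a = {\<omega>. pre \<omega> n \<in> - A}" by auto
  then show ?case by blast
next
  case (Union a)
  then have "\<forall>i. \<exists>A. a i = {\<omega>. pre \<omega> n \<in> A}" by blast
  then obtain A where "\<And>i. a i = {\<omega>. pre \<omega> n \<in> A i}" by metis
  then have "(\<Union>i. a i) = {\<omega>. pre \<omega> n \<in> (\<Union>i. A i)}" by auto
  then show ?case by blast
qed

locale bsum = bern p P for p :: "'g::{finite,ab_group_add} \<Rightarrow> real" and P +
  fixes N :: nat
  assumes N_ge: "N \<ge> 2"
begin

lemma bsP_meas: "block_sum N \<in> measurable P SeqSp"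
  by (subst meas_P_iff) (rule block_sum_meas)

lemma partA: "distr (distr P SeqSp (block_sum N)) SeqSp shift = distr P SeqSp (block_sum N)"
proof -
  have "distr (distr P SeqSp (block_sum N)) SeqSp shift = distr P SeqSp (shift \<circ> block_sum N)"
    by (rule distr_distr[OF shift_meas bsP_meas])
  also have "shift \<circ> block_sum N = block_sum N \<circ> shift"
    by (rule ext) (simp add: block_sum_shift)
  also have "distr P SeqSp (block_sum N \<circ> shift) = distr (distr P SeqSp shift) SeqSp (block_sum N)"
    by (rule distr_distr[OF block_sum_meas shiftP_meas, symmetric])
  also have "\<dots> = distr P SeqSp (block_sum N)" by (simp add: shift_inv)
  finally show ?thesis .
qed

lemma P0_meas: "S \<in> sets SeqSp \<Longrightarrow> measure (distr P SeqSp (block_sum N)) S = measure P (block_sum N -` S)"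
  using measure_distr[OF bsP_meas] by simp

lemma bs_pre_set: "block_sum N -` {\<omega>. pre \<omega> n \<in> A}
   = {\<omega>. pre \<omega> (n + N - 1) \<in> {w. map (\<lambda>j. \<Sum>i<N. w ! (j + i)) [0..<n] \<in> A}}"
proof -
  have e: "pre (block_sum N \<omega>) n = map (\<lambda>j. \<Sum>i<N. pre \<omega> (n + N - 1) ! (j + i)) [0..<n]" for \<omega>
    unfolding pre_def block_sum_def using N_ge by (auto intro!: sum.cong)
  show ?thesis by (simp only: e vimage_def mem_Collect_eq)
qed

lemma partB: "psi_mixing (distr P SeqSp (block_sum N))"
proof -
  let ?Q = "distr P SeqSp (block_sum N)"
  define c where "c = Min (range p)"
  have c0: "0 < c" unfolding c_def using p_pos by (subst Min_gr_iff) auto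
  have cp: "c \<le> p g" for g unfolding c_def by (rule Min_le) auto
  have p1: "p g \<le> 1" for g
    using member_le_sum[of g UNIV p] p_pos p_sum by (simp add: less_imp_le)
  define C where "C = (1/c) ^ (N - 1)"
  have c1: "1 \<le> 1/c" using c0 cp[of undefined] p1[of undefined] by (simp add: field_simps)
  have C1: "1 \<le> C" unfolding C_def using c1 by (rule one_le_power)
  define \<psi> where "\<psi> = (\<lambda>m::nat. if m < N - 1 then C else 0)"
  show ?thesis unfolding psi_mixing_def
  proof (intro exI[of _ \<psi>] conjI allI impI)
    show "0 \<le> \<psi> m" for m unfolding \<psi>_def using C1 by simp
    show "\<psi> \<longlonglongrightarrow> 0"
      by (rule tendsto_eventually) (auto simp: \<psi>_def eventually_sequentially intro!: exI[of _ "N - 1"])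
    fix m n :: nat and E F :: "(nat \<Rightarrow> 'g) set"
    assume EF: "E \<in> coord_sigma n \<and> F \<in> sets SeqSp"
    then obtain A where EA: "E = {\<omega>. pre \<omega> n \<in> A}" using coord_pre by blast
    have F: "F \<in> sets SeqSp" using EF by simp
    let ?A' = "{w. map (\<lambda>j. \<Sum>i<N. w ! (j + i)) [0..<n] \<in> A}"
    let ?X = "{\<omega>. pre \<omega> (n + N - 1) \<in> ?A'}"
    let ?Y = "block_sum N -` F"
    have Y: "?Y \<in> sets SeqSp" using measurable_sets[OF block_sum_meas F] by simp
    have Emeas: "E \<in> sets SeqSp" unfolding EA by (rule pre_set_meas)
    have TF: "(shift ^^ (n + m)) -` F \<in> sets SeqSp"
      using measurable_sets[OF shiftpow_meas F] by simp
    have QE: "measure ?Q E = measure P ?X" using P0_meas[OF Emeas] unfolding EA bs_pre_set .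
    have QF: "measure ?Q F = measure P ?Y" using P0_meas[OF F] .
    have "block_sum N -` (E \<inter> (shift ^^ (n + m)) -` F) = ?X \<inter> (shift ^^ (n + m)) -` ?Y"
      unfolding EA bs_pre_set[symmetric] by (auto simp: block_sum_shiftpow)
    then have QEF: "measure ?Q (E \<inter> (shift ^^ (n + m)) -` F) = measure P (?X \<inter> (shift ^^ (n + m)) -` ?Y)"
      using P0_meas[OF sets.Int[OF Emeas TF]] by simp
    have nn: "0 \<le> measure P ?X * measure P ?Y" by simp
    show "\<bar>measure ?Q (E \<inter> (shift ^^ (n + m)) -` F) - measure ?Q E * measure ?Q F\<bar>
          \<le> \<psi> m * measure ?Q E * measure ?Q F"
    proof (cases "m < N - 1")
      case False
      then have le: "n + N - 1 \<le> n + m" by simp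
      have "measure P (?X \<inter> (shift ^^ (n + m)) -` ?Y) = measure P ?X * measure P ?Y"
        by (rule indep[OF Y le])
      then show ?thesis unfolding QE QF QEF \<psi>_def using False by simp
    next
      case True
      then have le: "n + m \<le> n + N - 1" by simp
      have "measure P (?X \<inter> (shift ^^ (n + m)) -` ?Y) \<le> (1/c) ^ (n + N - 1 - (n + m)) * measure P ?X * measure P ?Y"
        by (rule bound[OF Y le c0 cp])
      also have "(1/c) ^ (n + N - 1 - (n + m)) \<le> C"
        unfolding C_def using True by (intro power_increasing c1) auto
      then have "(1/c) ^ (n + N - 1 - (n + m)) * measure P ?X * measure P ?Y \<le> C * measure P ?X * measure P ?Y"
        using nn by (simp add: mult.assoc mult_right_mono)
      finally have up: "measure P (?X \<inter> (shift ^^ (n + m)) -` ?Y) \<le> C * measure P ?X * measure P ?Y" .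
      have "1 * (measure P ?X * measure P ?Y) \<le> C * (measure P ?X * measure P ?Y)"
        by (rule mult_right_mono[OF C1 nn])
      then have "measure P ?X * measure P ?Y \<le> C * measure P ?X * measure P ?Y"
        by (simp only: mult_1 mult.assoc)
      moreover have "0 \<le> measure P (?X \<inter> (shift ^^ (n + m)) -` ?Y)" by simp
      moreover have "\<And>a b d::real. 0 \<le> a \<Longrightarrow> 0 \<le> b \<Longrightarrow> a \<le> d \<Longrightarrow> b \<le> d \<Longrightarrow> \<bar>a - b\<bar> \<le> d"
        by linarith
      ultimately have "\<bar>measure P (?X \<inter> (shift ^^ (n + m)) -` ?Y) - measure P ?X * measure P ?Y\<bar>
          \<le> C * measure P ?X * measure P ?Y" using up nn by blast
      then show ?thesis unfolding QE QF QEF \<psi>_def using True by simp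
    qed
  qed
qed

end



definition per :: "'a list \<Rightarrow> nat \<Rightarrow> 'a list" where
  "per x L = map (\<lambda>j. x ! (j mod length x)) [0..<L]"

lemma length_per[simp]: "length (per x L) = L" by (simp add: per_def)
lemma nth_per: "j < L \<Longrightarrow> per x L ! j = x ! (j mod length x)" by (simp add: per_def)

lemma per_add: "0 < length x \<Longrightarrow> per x (length x + L) = x @ per x L"
proof (rule nth_equalityI)
  fix j assume "0 < length x" and j: "j < length (per x (length x + L))"
  show "per x (length x + L) ! j = (x @ per x L) ! j"
  proof (cases "j < length x")
    case True then show ?thesis using j by (simp add: nth_per nth_append)
  next
    case False
    then have "j mod length x = (j - length x) mod length x" by (simp add: le_mod_geq)
    then show ?thesis using j False by (simp add: nth_per nth_append)
  qed
qed simp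

lemma per_take: "t \<le> length x \<Longrightarrow> per x t = take t x"
  by (auto simp: list_eq_iff_nth_eq nth_per)

lemma wt_per: "0 < length x \<Longrightarrow> t \<le> length x \<Longrightarrow>
    wt p (per x (q * length x + t)) = wt p x ^ q * wt p (take t x)"
proof (induction q)
  case 0 then show ?case by (simp add: per_take)
next
  case (Suc q)
  have "per x (Suc q * length x + t) = x @ per x (q * length x + t)"
    using per_add[OF Suc.prems(1), of "q * length x + t"] by (simp add: add.assoc)
  then show ?case using Suc by simp
qed

lemma window_step: "(\<Sum>i<N. f (Suc j + i)) + f j = (\<Sum>i<N. f (j + i)) + (f (j + N) :: 'a::comm_monoid_add)"
proof -
  have "(\<Sum>i<Suc N. f (j + i)) = f j + (\<Sum>i<N. f (Suc j + i))"
    by (subst sum.lessThan_Suc_shift) simp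
  moreover have "(\<Sum>i<Suc N. f (j + i)) = (\<Sum>i<N. f (j + i)) + f (j + N)" by simp
  ultimately show ?thesis by (simp add: add.commute)
qed

lemma window_periodic:
  fixes N j :: nat
  assumes "\<And>j. f (j + N) = f j"
  shows "(\<Sum>i<N. f (j + i)) = (\<Sum>i<N. (f i :: 'a::ab_group_add))"
proof (induction j)
  case (Suc j)
  have "(\<Sum>i<N. f (Suc j + i)) + f j = (\<Sum>i<N. f (j + i)) + f j"
    using window_step[where N=N and f=f and j=j] assms[of j] by simp
  then show ?case using Suc by simp
qed simp

lemma window_shift:
  fixes N j :: nat
  assumes "(\<Sum>i<N. f (Suc j + i)) = (\<Sum>i<N. f (j + i))"
  shows "f (j + N) = (f j :: 'a::ab_group_add)"
  using window_step[where N=N and f=f and j=j] assms by simp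

lemma sum_list_upd: "k < length xs \<Longrightarrow> sum_list (xs[k := y]) = sum_list xs + y - xs ! k + (0::'a::ab_group_add)"
proof (induction xs arbitrary: k)
  case (Cons a xs)
  then show ?case by (cases k) (auto simp: algebra_simps)
qed simp

lemma wt_upd: "k < length xs \<Longrightarrow> wt p (xs[k := y]) * p (xs ! k) = wt p xs * p y"
proof (induction xs arbitrary: k)
  case (Cons a xs)
  then show ?case by (cases k) (auto simp: algebra_simps)
qed simp

lemma wt_replicate: "wt p (replicate n a) = p a ^ n"
  by (induction n) auto

lemma wt_prod: "wt p x = (\<Prod>j<length x. p (x ! j))"
  unfolding wt_def prod.list_conv_set_nth by (simp add: atLeast0LessThan)

lemma wt_xk:
  assumes "k < N" "0 < p h"
  shows "wt p ((replicate N h)[k := g]) = p h ^ (N - 1) * p g"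
proof -
  have "wt p ((replicate N h)[k := g]) * p h = p h ^ N * p g"
    using wt_upd[of k "replicate N h" p g] assms by (simp add: wt_replicate)
  moreover have "p h ^ N = p h ^ (N - 1) * p h" using assms by (cases N) auto
  ultimately show ?thesis using assms by (simp add: field_simps)
qed

lemma comb:
  fixes p :: "'g::ab_group_add \<Rightarrow> real"
  assumes pos: "\<And>y. 0 < p y" and gh: "g \<noteq> h" and pg: "p g < p h"
    and sec: "\<And>y. y \<noteq> h \<Longrightarrow> p y \<le> p g" and N: "0 < N"
    and x: "length x = N" and sx: "sum_list x = sum_list ((replicate N h)[0 := g])"
  shows "wt p x \<le> p h ^ (N - 1) * p g \<and>
         (wt p x = p h ^ (N - 1) * p g \<longrightarrow> (\<exists>k<N. x = (replicate N h)[k := g]))"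
proof -
  have srep: "sum_list ((replicate N h)[k := y]) = sum_list (replicate N h) + y - h" if "k < N" for k y
    using sum_list_upd[of k "replicate N h" y] that by simp
  have ph: "p y \<le> p h" for y using sec[of y] pg by (cases "y = h") auto
  show ?thesis
  proof (cases "\<exists>j1 j2. j1 < N \<and> j2 < N \<and> j1 \<noteq> j2 \<and> x ! j1 \<noteq> h \<and> x ! j2 \<noteq> h")
    case True
    then obtain j1 j2 where j: "j1 < N" "j2 < N" "j1 \<noteq> j2" "x ! j1 \<noteq> h" "x ! j2 \<noteq> h" by blast
    let ?R = "{..<N} - {j1, j2}"
    have cR: "card ?R = N - 2" using j by (simp add: card_Diff_subset)
    have "wt p x = (\<Prod>j<N. p (x ! j))" using x by (simp add: wt_prod)
    also have "\<dots> = (\<Prod>j\<in>{j1, j2}. p (x ! j)) * (\<Prod>j\<in>?R. p (x ! j))"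
      using j by (subst prod.subset_diff[of "{j1, j2}" "{..<N}"]) (auto simp: mult.commute)
    also have "\<dots> = p (x ! j1) * p (x ! j2) * (\<Prod>j\<in>?R. p (x ! j))" using j by simp
    also have "\<dots> \<le> p g * p g * p h ^ (N - 2)"
    proof (intro mult_mono)
      show "(\<Prod>j\<in>?R. p (x ! j)) \<le> p h ^ (N - 2)"
        using prod_mono[of ?R "\<lambda>j. p (x ! j)" "\<lambda>_. p h"] ph pos cR
        by (simp add: less_imp_le)
    qed (use sec j pos in \<open>auto simp: less_imp_le prod_nonneg\<close>)
    also have "\<dots> < p h ^ (N - 1) * p g"
    proof -
      have "N - 1 = Suc (N - 2)" using j by simp
      then have e: "p h ^ (N - 1) = p h * p h ^ (N - 2)" by (metis power_Suc)
      have "p h ^ (N - 1) * p g = p g * p h * p h ^ (N - 2)" by (simp only: e mult_ac)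
      moreover have "p g * p g * p h ^ (N - 2) < p g * p h * p h ^ (N - 2)"
        using pos[of g] pos[of h] pg by simp
      ultimately show ?thesis by linarith
    qed
    finally show ?thesis by simp
  next
    case False
    note F = False
    show ?thesis
    proof (cases "\<exists>k<N. x ! k \<noteq> h")
      case True
      then obtain k where k: "k < N" "x ! k \<noteq> h" by blast
      have xe: "x = (replicate N h)[k := x ! k]"
        using F k x by (auto simp: list_eq_iff_nth_eq nth_list_update)
      have "sum_list x = sum_list (replicate N h) + x ! k - h" by (subst xe) (rule srep[OF k(1)])
      moreover have "sum_list ((replicate N h)[0 := g]) = sum_list (replicate N h) + g - h"
        using N by (rule srep)
      ultimately have "x ! k = g" using sx by simp
      then have "x = (replicate N h)[k := g]" using xe by simp
      then show ?thesis using wt_xk[where p=p and h=h and g=g, OF k(1) pos[of h]] k by auto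
    next
      case False
      then have "x = replicate N h" using x by (auto simp: list_eq_iff_nth_eq)
      then have "sum_list (replicate N h) = sum_list (replicate N h) + g - h"
        using sx srep[OF N] by simp
      then show ?thesis using gh by simp
    qed
  qed
qed




context bsum
begin

lemma take_per: "k \<le> L \<Longrightarrow> take k (per x L) = per x k"
  by (simp add: per_def take_map)

lemma take_per_self: "length x \<le> L \<Longrightarrow> take (length x) (per x L) = x"
  by (simp add: take_per per_take)

abbreviation "P0b \<equiv> distr P SeqSp (block_sum N)"

definition Ws :: "'g \<Rightarrow> nat \<Rightarrow> 'g list set" where
  "Ws s n = {w. length w = n + N - 1 \<and> (\<forall>j<n. (\<Sum>i<N. w ! (j + i)) = s)}"

definition Xs :: "'g \<Rightarrow> 'g list set" where
  "Xs s = {x. length x = N \<and> sum_list x = s}"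

lemma P0_cyl: "measure P0b (cyl_of (\<lambda>_. s) n) = (\<Sum>w\<in>Ws s n. wt p w)"
proof -
  have c: "cyl_of (\<lambda>_. s) n = {\<omega>. pre \<omega> n \<in> {replicate n s}}"
    by (auto simp: cyl_of_def list_eq_iff_nth_eq)
  have m: "cyl_of (\<lambda>_. s) n \<in> sets SeqSp" unfolding c by (rule pre_set_meas)
  have e: "{w \<in> {w. map (\<lambda>j. \<Sum>i<N. w ! (j + i)) [0..<n] \<in> {replicate n s}}. length w = n + N - 1} = Ws s n"
    by (auto simp: Ws_def list_eq_iff_nth_eq)
  show ?thesis unfolding P0_meas[OF m] unfolding c bs_pre_set meas_pre e ..
qed

lemma N0: "0 < N" using N_ge by simp

lemma Ws_Xs:
  assumes n: "1 \<le> n"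
  shows "(\<Sum>w\<in>Ws s n. wt p w) = (\<Sum>x\<in>Xs s. wt p (per x (n + N - 1)))"
proof -
  let ?L = "n + N - 1"
  have NL: "N \<le> ?L" using n by simp
  have "bij_betw (\<lambda>x. per x ?L) (Xs s) (Ws s n)"
    unfolding bij_betw_def
  proof
    show "inj_on (\<lambda>x. per x ?L) (Xs s)"
    proof (rule inj_onI)
      fix x y assume x: "x \<in> Xs s" and y: "y \<in> Xs s" and e: "per x ?L = per y ?L"
      have "take N (per x ?L) = x"
        using x NL take_per_self[of x ?L] by (simp add: Xs_def)
      moreover have "take N (per y ?L) = y"
        using y NL take_per_self[of y ?L] by (simp add: Xs_def)
      ultimately show "x = y" using e by metis
    qed
    show "(\<lambda>x. per x ?L) ` Xs s = Ws s n"
    proof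
      show "(\<lambda>x. per x ?L) ` Xs s \<subseteq> Ws s n"
      proof clarify
        fix x assume x: "x \<in> Xs s"
        then have lx: "length x = N" and sx: "sum_list x = s" by (auto simp: Xs_def)
        have "(\<Sum>i<N. per x ?L ! (j + i)) = s" if j: "j < n" for j
        proof -
          have "(\<Sum>i<N. per x ?L ! (j + i)) = (\<Sum>i<N. x ! ((j + i) mod N))"
            using j lx by (intro sum.cong) (auto simp: nth_per)
          also have "\<dots> = (\<Sum>i<N. x ! (i mod N))"
            by (rule window_periodic[where f="\<lambda>i. x ! (i mod N)"]) simp
          also have "\<dots> = sum_list x"
            using lx by (simp add: sum_list_sum_nth atLeast0LessThan)
          finally show ?thesis using sx by simp
        qed
        then show "per x ?L \<in> Ws s n" by (simp add: Ws_def)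
      qed
      show "Ws s n \<subseteq> (\<lambda>x. per x ?L) ` Xs s"
      proof
        fix w assume w: "w \<in> Ws s n"
        then have lw: "length w = ?L" and ws: "\<And>j. j < n \<Longrightarrow> (\<Sum>i<N. w ! (j + i)) = s"
          by (auto simp: Ws_def)
        have step: "w ! (j + N) = w ! j" if "j + N < ?L" for j
        proof (rule window_shift[where f="\<lambda>i. w ! i"])
          show "(\<Sum>i<N. w ! (Suc j + i)) = (\<Sum>i<N. w ! (j + i))"
            using ws[of j] ws[of "Suc j"] that by simp
        qed
        have per: "w ! j = w ! (j mod N)" if "j < ?L" for j
          using that
        proof (induction j rule: less_induct)
          case (less j)
          show ?case
          proof (cases "j < N")
            case True then show ?thesis by simp
          next
            case False
            then have "w ! j = w ! (j - N)" using step[of "j - N"] less.prems by simp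
            also have "\<dots> = w ! ((j - N) mod N)" using less False N0 by simp
            also have "(j - N) mod N = j mod N" using False by (simp add: le_mod_geq)
            finally show ?thesis .
          qed
        qed
        let ?x = "take N w"
        have lx: "length ?x = N" using lw NL by simp
        have "sum_list ?x = (\<Sum>i<N. w ! (0 + i))"
          using lx NL lw by (simp add: sum_list_sum_nth atLeast0LessThan)
        also have "\<dots> = s" using ws[of 0] n by simp
        finally have "?x \<in> Xs s" using lx by (simp add: Xs_def)
        moreover have "w = per ?x ?L"
          using lw lx per NL N0 by (auto simp: list_eq_iff_nth_eq nth_per nth_take)
        ultimately show "w \<in> (\<lambda>x. per x ?L) ` Xs s" by blast
      qed
    qed
  qed
  then show ?thesis by (rule sum.reindex_bij_betw[symmetric])
qed


lemma wt_take: "t \<le> length x \<Longrightarrow> wt p (take t x) = (\<Prod>j<t. p (x ! j))"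
  by (simp add: wt_prod min_def)

lemma partC:
  assumes lt1: "\<And>g. p g < 1" and hmax: "\<forall>g. g \<noteq> h \<longrightarrow> p g < p h"
  shows "\<exists>s. \<not> convergent (\<lambda>n. measure P0b (cyl_of (\<lambda>_. s) (Suc n)) / measure P0b (cyl_of (\<lambda>_. s) n))"
proof -
  let ?S = "UNIV - {h}"
  have Sne: "?S \<noteq> {}"
  proof
    assume "?S = {}"
    then have "UNIV = {h}" by auto
    then have "(\<Sum>g\<in>UNIV. p g) = (\<Sum>g\<in>{h}. p g)" by (simp only:)
    then have "(\<Sum>g\<in>UNIV. p g) = p h" by simp
    then show False using p_sum lt1[of h] by simp
  qed
  have "Max (p ` ?S) \<in> p ` ?S" using Sne by (intro Max_in) auto
  then obtain g where g0: "g \<in> ?S" "Max (p ` ?S) = p g" by (rule imageE)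
  then have g: "g \<noteq> h" "p g = Max (p ` ?S)" by auto
  have sec: "p y \<le> p g" if "y \<noteq> h" for y using g that by (auto intro: Max_ge)
  have pg: "p g < p h" using hmax g(1) by blast
  define xk where "xk k = (replicate N h)[k := g]" for k
  define s where "s = sum_list (xk 0)"
  have xkn: "xk k ! j = (if j = k then g else h)" if "j < N" for j k
    using that unfolding xk_def by (simp add: nth_list_update)
  define PP where "PP = p h ^ (N - 1) * p g"
  have Pi0: "0 < PP" unfolding PP_def using p_pos by simp
  define a where "a L = (\<Sum>x\<in>Xs s. wt p (per x L))" for L
  have meas_a: "measure P0b (cyl_of (\<lambda>_. s) n) = a (n + N - 1)" if "1 \<le> n" for n
    unfolding P0_cyl Ws_Xs[OF that] a_def ..
  have finX: "finite (Xs s)" by (rule finite_subset[OF _ finite_len[of N]]) (auto simp: Xs_def)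
  define D where "D = xk ` {..<N}"
  have srep: "sum_list ((replicate N h)[k := y]) = sum_list (replicate N h) + y - h" if "k < N" for k y
    using sum_list_upd[of k "replicate N h" y] that by simp
  have DX: "D \<subseteq> Xs s" unfolding D_def Xs_def s_def xk_def using srep N0 by auto
  have wtD: "wt p x = PP" if "x \<in> D" for x
    using that wt_xk[where p=p and h=h and g=g] p_pos unfolding D_def xk_def PP_def by auto
  have comb': "wt p x \<le> PP \<and> (wt p x = PP \<longrightarrow> x \<in> D)" if "x \<in> Xs s" for x
    using comb[of p g h N x, OF p_pos g(1) pg sec N0] that
    unfolding Xs_def s_def xk_def D_def PP_def by auto
  define c where "c t = (\<Sum>k<N. \<Prod>j<t. p (xk k ! j))" for t
  have lim: "(\<lambda>q. a (q * N + t) / PP ^ q) \<longlonglongrightarrow> c t" if t: "t \<le> N" for t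
  proof -
    have eq: "a (q * N + t) / PP ^ q = (\<Sum>x\<in>Xs s. (wt p x / PP) ^ q * wt p (take t x))" for q
    proof -
      have "a (q * N + t) = (\<Sum>x\<in>Xs s. wt p x ^ q * wt p (take t x))"
        unfolding a_def using wt_per[where p=p and t=t and q=q] N0 t by (intro sum.cong) (auto simp: Xs_def)
      then show ?thesis by (simp add: sum_divide_distrib power_divide)
    qed
    have "(\<lambda>q. \<Sum>x\<in>Xs s. (wt p x / PP) ^ q * wt p (take t x))
        \<longlonglongrightarrow> (\<Sum>x\<in>Xs s. if x \<in> D then wt p (take t x) else 0)"
    proof (rule tendsto_sum)
      fix x assume x: "x \<in> Xs s"
      show "(\<lambda>q. (wt p x / PP) ^ q * wt p (take t x)) \<longlonglongrightarrow> (if x \<in> D then wt p (take t x) else 0)"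
      proof (cases "x \<in> D")
        case True then show ?thesis using wtD Pi0 by simp
      next
        case False
        then have "wt p x < PP" using comb'[OF x] by auto
        then have "norm (wt p x / PP) < 1" using wt_pos Pi0 by (simp add: abs_of_pos)
        then have "(\<lambda>q. (wt p x / PP) ^ q) \<longlonglongrightarrow> 0" by (rule LIMSEQ_power_zero)
        then show ?thesis using False by (simp add: tendsto_mult_left_zero)
      qed
    qed
    moreover have "(\<Sum>x\<in>Xs s. if x \<in> D then wt p (take t x) else 0) = (\<Sum>x\<in>D. wt p (take t x))"
      using DX by (simp add: sum.inter_restrict[OF finX, symmetric] Int_absorb1)
    moreover have "(\<Sum>x\<in>D. wt p (take t x)) = c t"
    proof -
      have inj: "inj_on xk {..<N}"
      proof (rule inj_onI)
        fix k1 k2 assume k: "k1 \<in> {..<N}" "k2 \<in> {..<N}" "xk k1 = xk k2"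
        then have "xk k1 ! k1 = xk k2 ! k1" by simp
        then show "k1 = k2" using k g(1) xkn[of k1 k1] xkn[of k1 k2] by (auto split: if_splits)
      qed
      from inj have "(\<Sum>x\<in>D. wt p (take t x)) = (\<Sum>k<N. wt p (take t (xk k)))"
        unfolding D_def by (simp add: sum.reindex)
      also have "\<dots> = c t"
        unfolding c_def using t by (intro sum.cong refl wt_take) (simp add: xk_def)
      finally show ?thesis .
    qed
    ultimately show ?thesis unfolding eq by simp
  qed
  obtain M where M: "N = Suc (Suc M)" using N_ge by (metis add_2_eq_Suc le_iff_add)
  have c0: "c 0 = real N" unfolding c_def by simp
  have c1: "c 1 = p g + real (Suc M) * p h"
  proof -
    have "c 1 = (\<Sum>k<Suc (Suc M). p (if 0 = k then g else h))" unfolding c_def using xkn M by simp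
    also have "\<dots> = p g + (\<Sum>k<Suc M. p h)" by (subst sum.lessThan_Suc_shift) simp
    finally show ?thesis by simp
  qed
  have c2: "c 2 = 2 * p g * p h + real M * p h ^ 2"
  proof -
    have "c 2 = (\<Sum>k<N. p (xk k ! 0) * p (xk k ! 1))" unfolding c_def by (simp add: numeral_2_eq_2)
    also have "\<dots> = (\<Sum>k<Suc (Suc M). p (if 0 = k then g else h) * p (if 1 = k then g else h))"
      using xkn M by simp
    also have "\<dots> = p g * p h + (p h * p g + (\<Sum>k<M. p h * p h))"
      by (subst sum.lessThan_Suc_shift, subst sum.lessThan_Suc_shift) simp
    also have "\<dots> = 2 * p g * p h + real M * p h ^ 2"
      by (simp add: power2_eq_square algebra_simps)
    finally show ?thesis .
  qed
  have c0pos: "0 < c 0" using c0 N0 by simp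
  have c1pos: "0 < c 1"
  proof -
    have "0 \<le> real (Suc M) * p h" using p_pos[of h] by simp
    then show ?thesis unfolding c1 using p_pos[of g] by linarith
  qed
  define r where "r n = measure P0b (cyl_of (\<lambda>_. s) (Suc n)) / measure P0b (cyl_of (\<lambda>_. s) n)" for n
  have rsub: "r (q * N + t) = (a (Suc q * N + t) / PP ^ Suc q) / (a (Suc q * N + (t - 1)) / PP ^ Suc q)"
    if "1 \<le> t" for q t
  proof -
    have "r (q * N + t) = a (Suc q * N + t) / a (Suc q * N + (t - 1))"
      unfolding r_def using that N0 by (simp add: meas_a algebra_simps)
    then show ?thesis using Pi0 by simp
  qed
  have limS: "(\<lambda>q. a (Suc q * N + t) / PP ^ Suc q) \<longlonglongrightarrow> c t" if "t \<le> N" for t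
    using LIMSEQ_Suc[OF lim[OF that]] by simp
  have l1: "(\<lambda>q. r (q * N + 1)) \<longlonglongrightarrow> c 1 / c 0"
  proof -
    have "(\<lambda>q. (a (Suc q * N + 1) / PP ^ Suc q) / (a (Suc q * N + (1 - 1)) / PP ^ Suc q)) \<longlonglongrightarrow> c 1 / c 0"
      using limS[of 1] limS[of 0] N0 c0pos by (intro tendsto_divide) auto
    then show ?thesis using rsub[of 1] by simp
  qed
  have l2: "(\<lambda>q. r (q * N + 2)) \<longlonglongrightarrow> c 2 / c 1"
  proof -
    have "(\<lambda>q. (a (Suc q * N + 2) / PP ^ Suc q) / (a (Suc q * N + (2 - 1)) / PP ^ Suc q)) \<longlonglongrightarrow> c 2 / c 1"
      using limS[of 2] limS[of 1] N_ge c1pos by (intro tendsto_divide) auto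
    then show ?thesis using rsub[of 2] by simp
  qed
  have "\<not> convergent r"
  proof
    assume "convergent r"
    then obtain l where l: "r \<longlonglongrightarrow> l" by (auto simp: convergent_def)
    have sm: "strict_mono (\<lambda>q. q * N + t)" for t using N0 by (auto simp: strict_mono_Suc_iff)
    have "(\<lambda>q. r (q * N + 1)) \<longlonglongrightarrow> l" using LIMSEQ_subseq_LIMSEQ[OF l sm[of 1]] by (simp add: comp_def)
    with l1 have e1: "c 1 / c 0 = l" by (rule LIMSEQ_unique)
    have "(\<lambda>q. r (q * N + 2)) \<longlonglongrightarrow> l" using LIMSEQ_subseq_LIMSEQ[OF l sm[of 2]] by (simp add: comp_def)
    with l2 have e2: "c 2 / c 1 = l" by (rule LIMSEQ_unique)
    have f1: "c 1 = l * c 0" using e1 c0pos by (simp add: field_simps)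
    have f2: "c 2 = l * c 1" using e2 c1pos by (simp add: field_simps)
    have "c 1 * c 1 = c 0 * c 2" unfolding f2 by (subst (2) f1) simp
    then have "(p h - p g) ^ 2 = 0" unfolding c0 c1 c2 M by (simp add: algebra_simps power2_eq_square)
    then show False using pg by simp
  qed
  then show ?thesis unfolding r_def by blast
qed

end

theorem theorem7:
  fixes p :: "'g::{finite, ab_group_add} \<Rightarrow> real"
    and P :: "(nat \<Rightarrow> 'g) measure"
    and N :: nat
  assumes p_pos: "\<And>g. 0 < p g" and p_lt1: "\<And>g. p g < 1"
    and p_sum: "(\<Sum>g\<in>UNIV. p g) = 1"
    and P_sets: "sets P = sets SeqSp"
    and P_prob: "prob_space P"
    and P_bern: "\<And>gs. measure P (cylinder gs) = (\<Prod>j<length gs. p (gs ! j))"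
    and N_ge: "N \<ge> 2"
  defines "P0 \<equiv> distr P SeqSp (block_sum N)"
  shows "distr P0 SeqSp shift = P0 \<and> psi_mixing P0 \<and>
         ((\<exists>h. \<forall>g. g \<noteq> h \<longrightarrow> p g < p h) \<longrightarrow>
           (\<exists>s. \<not> convergent (\<lambda>n. measure P0 (cyl_of (\<lambda>_. s) (Suc n))
                                    / measure P0 (cyl_of (\<lambda>_. s) n))))"
proof -
  interpret bsum p P N
    by (rule bsum.intro[OF bern.intro[OF p_pos p_sum P_sets P_prob P_bern] bsum_axioms.intro[OF N_ge]])
  show ?thesis unfolding P0_def
  proof (intro conjI impI)
    show "distr (distr P SeqSp (block_sum N)) SeqSp shift = distr P SeqSp (block_sum N)"
      by (rule partA)
    show "psi_mixing (distr P SeqSp (block_sum N))" by (rule partB)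
    assume "\<exists>h. \<forall>g. g \<noteq> h \<longrightarrow> p g < p h"
    then obtain h where "\<forall>g. g \<noteq> h \<longrightarrow> p g < p h" by blast
    then show "\<exists>s. \<not> convergent (\<lambda>n. measure (distr P SeqSp (block_sum N)) (cyl_of (\<lambda>_. s) (Suc n))
                                    / measure (distr P SeqSp (block_sum N)) (cyl_of (\<lambda>_. s) n))"
      by (rule partC[OF p_lt1])
  qed
qed

end
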